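(* Let $T\in C^{\mathrm{Lip}}_{d-1}(\mathbb{R}^N;\mathbb{Z})$ and let $U\in C^{\mathrm{Lip}}_{d}(\mathbb{R}^N;\mathbb{Z})$ satisfy $\partial U=2T$. Then the reduction $U\bmod 2\in C^{\mathrm{Lip}}_{d}(\mathbb{R}^N;\mathbb{Z}/2)$ is a mod-2 cycle, and \[\mathrm{FV}(T)\le\frac{\mathrm{mass}\,U+\mathrm{NOA}(U\bmod 2)}{2}.\]
   Context: For $\mathbb{K}\in\{\mathbb{Z},\mathbb{Z}/2\}$ (norm: usual absolute value on $\mathbb{Z}$; $|0|=0,|1|=1$ on $\mathbb{Z}/2$), a Lipschitz $d$-chain $A\in C^{\mathrm{Lip}}_d(\mathbb{R}^N;\mathbb{K})$ is a finite formal sum $\sum_i a_i\alpha_i$, $a_i\in\mathbb{K}$, $\alpha_i$ Lipschitz maps from the standard $d$-simplex $\Delta$ into $\mathbb{R}^N$, with the singular boundary operator; $\mathrm{mass}\,A=\sum_i|a_i|\int_\Delta|J_{\alpha_i}|$. $\mathrm{FV}(T)=\inf\{\mathrm{mass}\,V: V\in C^{\mathrm{Lip}}_{d}(\mathbb{R}^N;\mathbb{Z}),\ \partial V=T\}$. For a mod-2 Lipschitz $d$-cycle $A\in C^{\mathrm{Lip}}_d(\mathbb{R}^N;\mathbb{Z}/2)$, a pseudo-orientation of $A$ is an $R\in C^{\mathrm{Lip}}_d(\mathbb{R}^N;\mathbb{Z})$ with $\partial R=0$ and $R\equiv A \pmod 2$; the nonorientability area is $\mathrm{NOA}(A)=\inf\{\mathrm{mass}\,R: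 R \text{ a pseudo-orientation of } A\}$. *)

theory Defs
  imports "HOL-Analysis.Analysis" "HOL-Library.Z2"
begin

text \<open>Points of R^d are represented as functions nat => real that vanish at
  all coordinates j >= d.  The standard d-simplex is conv {0, e_0, ..., e_(d-1)}.\<close>

definition std_simplex :: "nat \<Rightarrow> (nat \<Rightarrow> real) set" where
  "std_simplex d = {x. (\<forall>j\<ge>d. x j = 0) \<and> (\<forall>j<d. 0 \<le> x j) \<and> (\<Sum>j<d. x j) \<le> 1}"

definition enorm :: "nat \<Rightarrow> (nat \<Rightarrow> real) \<Rightarrow> real" where
  "enorm d h = sqrt (\<Sum>j<d. (h j)\<^sup>2)"

text \<open>Lipschitz singular d-simplex in R^N, canonically extended by 0 off the simplex
  (so that two maps agreeing on the simplex are the same simplex).\<close>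
definition lip_simplex :: "nat \<Rightarrow> ((nat \<Rightarrow> real) \<Rightarrow> real^'n) \<Rightarrow> bool" where
  "lip_simplex d \<sigma> \<longleftrightarrow>
     (\<exists>L. \<forall>x\<in>std_simplex d. \<forall>y\<in>std_simplex d. dist (\<sigma> x) (\<sigma> y) \<le> L * enorm d (\<lambda>j. x j - y j))
     \<and> (\<forall>x. x \<notin> std_simplex d \<longrightarrow> \<sigma> x = 0)"

definition lchain :: "nat \<Rightarrow> (((nat \<Rightarrow> real) \<Rightarrow> real^'n) \<Rightarrow> 'k::zero) \<Rightarrow> bool" where
  "lchain d c \<longleftrightarrow> finite {\<sigma>. c \<sigma> \<noteq> 0} \<and> (\<forall>\<sigma>. c \<sigma> \<noteq> 0 \<longrightarrow> lip_simplex d \<sigma>)"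

text \<open>i-th face map Delta_(d-1) -> Delta_d (affine, vertex order preserving,
  omitting vertex v_i, where v_0 = 0 and v_(j+1) = e_j).\<close>
definition face_map :: "nat \<Rightarrow> nat \<Rightarrow> (nat \<Rightarrow> real) \<Rightarrow> (nat \<Rightarrow> real)" where
  "face_map d i y = (\<lambda>j. if d \<le> j then 0
      else if i = 0 then (if j = 0 then 1 - (\<Sum>k<d-1. y k) else y (j - 1))
      else if j + 1 < i then y j else if j + 1 = i then 0 else y (j - 1))"

definition face :: "nat \<Rightarrow> ((nat \<Rightarrow> real) \<Rightarrow> real^'n) \<Rightarrow> nat \<Rightarrow> ((nat \<Rightarrow> real) \<Rightarrow> real^'n)" where
  "face d \<sigma> i = (\<lambda>y. if y \<in> std_simplex (d - 1) then \<sigma> (face_map d i y) else 0)"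

definition bd :: "nat \<Rightarrow> (((nat \<Rightarrow> real) \<Rightarrow> real^'n) \<Rightarrow> 'k::comm_ring_1)
                   \<Rightarrow> (((nat \<Rightarrow> real) \<Rightarrow> real^'n) \<Rightarrow> 'k)" where
  "bd d c = (\<lambda>\<tau>. if d = 0 then 0 else
      (\<Sum>\<sigma>\<in>{\<sigma>. c \<sigma> \<noteq> 0}. \<Sum>i\<le>d. (-1) ^ i * c \<sigma> * (if face d \<sigma> i = \<tau> then 1 else 0)))"

definition mod2 :: "(((nat \<Rightarrow> real) \<Rightarrow> real^'n) \<Rightarrow> int) \<Rightarrow> (((nat \<Rightarrow> real) \<Rightarrow> real^'n) \<Rightarrow> bit)" where
  "mod2 c = (\<lambda>\<sigma>. of_int (c \<sigma>))"

definition has_deriv_at :: "nat \<Rightarrow> ((nat \<Rightarrow> real) \<Rightarrow> real^'n) \<Rightarrow> (nat \<Rightarrow> real) \<Rightarrow> (nat \<Rightarrow> real^'n) \<Rightarrow> bool" where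
  "has_deriv_at d \<sigma> x D \<longleftrightarrow>
     (\<forall>e>0. \<exists>\<delta>>0. \<forall>h. (\<forall>j\<ge>d. h j = 0) \<and> 0 < enorm d h \<and> enorm d h < \<delta> \<longrightarrow>
        norm (\<sigma> (\<lambda>j. x j + h j) - \<sigma> x - (\<Sum>j<d. h j *\<^sub>R D j)) \<le> e * enorm d h)"

definition det_nat :: "nat \<Rightarrow> (nat \<Rightarrow> nat \<Rightarrow> real) \<Rightarrow> real" where
  "det_nat d M = (\<Sum>p\<in>{p. p permutes {..<d}}. of_int (sign p) * (\<Prod>i<d. M i (p i)))"

text \<open>|J_sigma|(x) = sqrt (det (D sigma^T D sigma)) where sigma is differentiable
  (Lipschitz maps are differentiable a.e. by Rademacher), 0 elsewhere.\<close>
definition jac :: "nat \<Rightarrow> ((nat \<Rightarrow> real) \<Rightarrow> real^'n) \<Rightarrow> (nat \<Rightarrow> real) \<Rightarrow> real" where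
  "jac d \<sigma> x = (if \<exists>D. has_deriv_at d \<sigma> x D
      then (let D = (SOME D. has_deriv_at d \<sigma> x D) in sqrt (det_nat d (\<lambda>i j. D i \<bullet> D j)))
      else 0)"

definition ext0 :: "nat \<Rightarrow> (nat \<Rightarrow> real) \<Rightarrow> (nat \<Rightarrow> real)" where
  "ext0 d x = (\<lambda>j. if j < d then x j else 0)"

definition simplex_vol :: "nat \<Rightarrow> ((nat \<Rightarrow> real) \<Rightarrow> real^'n) \<Rightarrow> real" where
  "simplex_vol d \<sigma> = integral\<^sup>L (completion (PiM {..<d} (\<lambda>_. lborel)))
      (\<lambda>x. indicator (std_simplex d) (ext0 d x) * jac d \<sigma> (ext0 d x))"

definition mass :: "nat \<Rightarrow> (((nat \<Rightarrow> real) \<Rightarrow> real^'n) \<Rightarrow> int) \<Rightarrow> real" where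
  "mass d c = (\<Sum>\<sigma>\<in>{\<sigma>. c \<sigma> \<noteq> 0}. \<bar>real_of_int (c \<sigma>)\<bar> * simplex_vol d \<sigma>)"

definition FV :: "nat \<Rightarrow> (((nat \<Rightarrow> real) \<Rightarrow> real^'n) \<Rightarrow> int) \<Rightarrow> real" where
  "FV d T = Inf {mass d V | V. lchain d V \<and> bd d V = T}"

definition NOA :: "nat \<Rightarrow> (((nat \<Rightarrow> real) \<Rightarrow> real^'n) \<Rightarrow> bit) \<Rightarrow> real" where
  "NOA d A = Inf {mass d R | R. lchain d R \<and> bd d R = (\<lambda>_. 0) \<and> mod2 R = A}"

end

theory Submission
  imports Defs "Jordan_Normal_Form.Jordan_Normal_Form_Existence"
begin


definition bdS :: "nat \<Rightarrow> ((nat\<Rightarrow>real)\<Rightarrow>real^'n) \<Rightarrow> ((nat\<Rightarrow>real)\<Rightarrow>real^'n) \<Rightarrow> 'k::comm_ring_1" where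
  "bdS d \<sigma> \<tau> = (\<Sum>i\<le>d. (-1)^i * (if face d \<sigma> i = \<tau> then 1 else 0))"

lemma bd_expand:
  assumes "finite S" "{\<sigma>. c \<sigma> \<noteq> 0} \<subseteq> S"
  shows "bd d c \<tau> = (if d = 0 then 0 else \<Sum>\<sigma>\<in>S. c \<sigma> * bdS d \<sigma> \<tau>)"
proof -
  have "(\<Sum>\<sigma>\<in>{\<sigma>. c \<sigma> \<noteq> 0}. c \<sigma> * bdS d \<sigma> \<tau>) = (\<Sum>\<sigma>\<in>S. c \<sigma> * bdS d \<sigma> \<tau>)"
    by (rule sum.mono_neutral_left) (use assms in auto)
  moreover have "\<And>\<sigma>. (\<Sum>i\<le>d. (-1) ^ i * c \<sigma> * (if face d \<sigma> i = \<tau> then 1 else 0)) = c \<sigma> * bdS d \<sigma> \<tau>"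
    unfolding bdS_def sum_distrib_left by (rule sum.cong) (auto simp: ac_simps)
  ultimately show ?thesis unfolding bd_def by simp
qed

lemma collapse:
  fixes h :: "'a \<Rightarrow> 'b::comm_ring_1"
  assumes "finite F" "a \<in> F"
  shows "(\<Sum>\<rho>\<in>F. (if a = \<rho> then 1 else 0) * h \<rho>) = h a"
proof -
  have "(\<Sum>\<rho>\<in>F. (if a = \<rho> then 1 else 0) * h \<rho>) = (\<Sum>\<rho>\<in>F. if a = \<rho> then h \<rho> else 0)"
    by (rule sum.cong) auto
  also have "\<dots> = h a" using assms by (simp add: sum.delta)
  finally show ?thesis .
qed

lemma push_supp: "finite S \<Longrightarrow> {\<rho>. (\<Sum>x\<in>S. a x * (if f x = \<rho> then (1::'k::comm_ring_1) else 0)) \<noteq> 0} \<subseteq> f ` S"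
proof
  fix \<rho> assume "finite S" "\<rho> \<in> {\<rho>. (\<Sum>x\<in>S. a x * (if f x = \<rho> then (1::'k) else 0)) \<noteq> 0}"
  then obtain x where "x \<in> S" "a x * (if f x = \<rho> then (1::'k) else 0) \<noteq> 0"
    by (auto dest: sum.not_neutral_contains_not_neutral)
  then show "\<rho> \<in> f ` S" by (auto split: if_splits)
qed

lemma push_collapse:
  fixes a :: "'x \<Rightarrow> 'k::comm_ring_1"
  assumes "finite S" "finite F" "f ` S \<subseteq> F"
  shows "(\<Sum>\<rho>\<in>F. (\<Sum>x\<in>S. a x * (if f x = \<rho> then 1 else 0)) * h \<rho>) = (\<Sum>x\<in>S. a x * h (f x))"
proof -
  have "(\<Sum>\<rho>\<in>F. (\<Sum>x\<in>S. a x * (if f x = \<rho> then 1 else 0)) * h \<rho>)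
      = (\<Sum>x\<in>S. a x * (\<Sum>\<rho>\<in>F. (if f x = \<rho> then 1 else 0) * h \<rho>))"
    by (simp add: sum_distrib_right sum_distrib_left ac_simps sum.swap[of _ F])
  also have "\<dots> = (\<Sum>x\<in>S. a x * h (f x))"
    by (rule sum.cong) (use assms in \<open>auto simp: collapse\<close>)
  finally show ?thesis .
qed

lemma bd_push:
  fixes a :: "'x \<Rightarrow> 'k::comm_ring_1"
  assumes "finite S"
  shows "bd d (\<lambda>\<rho>. \<Sum>x\<in>S. a x * (if f x = \<rho> then 1 else 0)) \<tau> = (if d=0 then 0 else \<Sum>x\<in>S. a x * bdS d (f x) \<tau>)"
proof -
  have "bd d (\<lambda>\<rho>. \<Sum>x\<in>S. a x * (if f x = \<rho> then 1 else 0)) \<tau>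
     = (if d = 0 then 0 else \<Sum>\<rho>\<in>f`S. (\<Sum>x\<in>S. a x * (if f x = \<rho> then 1 else 0)) * bdS d \<rho> \<tau>)"
    by (rule bd_expand) (use push_supp[OF assms, of a f] assms in auto)
  also have "\<dots> = (if d=0 then 0 else \<Sum>x\<in>S. a x * bdS d (f x) \<tau>)"
    using push_collapse[OF assms _ order_refl, where a=a and h="\<lambda>\<rho>. bdS d \<rho> \<tau>"] assms by simp
  finally show ?thesis .
qed


lemma sum_gi:
  fixes y :: "nat \<Rightarrow> real"
  assumes "1 \<le> i"
  shows "(\<Sum>j<n. if j+1<i then y j else if j+1=i then 0 else y(j-1)) = (if n < i then \<Sum>k<n. y k else \<Sum>k<n-1. y k)"
proof (induction n)
  case 0 then show ?case by simp
next
  case (Suc n)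
  show ?case
  proof (cases "Suc n < i")
    case True then show ?thesis using Suc by simp
  next
    case False
    show ?thesis
    proof (cases "Suc n = i")
      case True
      have "(\<Sum>j<Suc n. if j+1<i then y j else if j+1=i then 0 else y(j-1))
          = (\<Sum>j<n. if j+1<i then y j else if j+1=i then 0 else y(j-1)) + 0"
        unfolding sum.lessThan_Suc using True by simp
      also have "\<dots> = (\<Sum>k<n. y k)" proof -
        have "n < i" using True by simp
        then show ?thesis using Suc.IH by simp
      qed
      finally show ?thesis using False by simp
    next
      case False2: False
      then have "n \<ge> i" "n \<ge> 1" using False assms by auto
      then obtain m where m: "n = Suc m" by (cases n) auto
      show ?thesis using Suc \<open>n \<ge> i\<close> False m by simp
    qed
  qed
qed

lemma sum_face_map:
  assumes "1 \<le> d" "i \<le> d"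
  shows "(\<Sum>j<d. face_map d i y j) = (if i = 0 then 1 else \<Sum>k<d-1. y k)"
proof (cases "i = 0")
  case True
  obtain e where e: "d = Suc e" using assms by (cases d) auto
  have "(\<Sum>j<d. face_map d i y j) = face_map d i y 0 + (\<Sum>k<e. face_map d i y (Suc k))"
    unfolding e sum.lessThan_Suc_shift by simp
  also have "\<dots> = 1" using True e by (simp add: face_map_def)
  finally show ?thesis using True by simp
next
  case False
  have "(\<Sum>j<d. face_map d i y j) = (\<Sum>j<d. if j+1<i then y j else if j+1=i then 0 else y(j-1))"
    by (rule sum.cong) (use False in \<open>auto simp: face_map_def\<close>)
  also have "\<dots> = (\<Sum>k<d-1. y k)" using sum_gi[of i y d] False assms by simp
  finally show ?thesis using False by simp
qed

lemma face_map_mem: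
  assumes "1 \<le> d" "i \<le> d" "y \<in> std_simplex (d-1)"
  shows "face_map d i y \<in> std_simplex d"
proof -
  have y: "\<And>j. j \<ge> d-1 \<Longrightarrow> y j = 0" "\<And>j. j < d-1 \<Longrightarrow> 0 \<le> y j" "(\<Sum>j<d-1. y j) \<le> 1"
    using assms(3) by (auto simp: std_simplex_def)
  have nn: "\<forall>j<d. 0 \<le> face_map d i y j"
    using y assms(2) by (auto simp: face_map_def)
  show ?thesis using nn sum_face_map[OF assms(1,2), of y] y(3)
    by (auto simp: std_simplex_def face_map_def)
qed


lemma face_map_comp:
  assumes "2 \<le> d" "j < i" "i \<le> d" "z \<in> std_simplex (d-2)"
  shows "face_map d i (face_map (d-1) j z) = face_map d j (face_map (d-1) (i-1) z)"
proof (rule ext)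
  fix m
  have z0: "\<And>k. k \<ge> d-2 \<Longrightarrow> z k = 0" using assms(4) by (auto simp: std_simplex_def)
  have S1: "(\<Sum>k<d-1. face_map (d-1) (i-1) z k) = (if i-1 = 0 then 1 else \<Sum>k<d-1-1. z k)"
    by (rule sum_face_map) (use assms in auto)
  have S2: "(\<Sum>k<d-1. face_map (d-1) j z k) = (if j = 0 then 1 else \<Sum>k<d-1-1. z k)"
    by (rule sum_face_map) (use assms in auto)
  show "face_map d i (face_map (d-1) j z) m = face_map d j (face_map (d-1) (i-1) z) m"
    apply (simp only: face_map_def[of d] S1 S2)
    using assms z0 apply (auto simp: face_map_def)
    done
qed


lemma face_face:
  assumes "2 \<le> d" "j < i" "i \<le> d"
  shows "face (d-1) (face d \<sigma> i) j = face (d-1) (face d \<sigma> j) (i-1)"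
proof (rule ext)
  fix z
  have dd: "d - 1 - 1 = d - 2" by simp
  show "face (d-1) (face d \<sigma> i) j z = face (d-1) (face d \<sigma> j) (i-1) z"
  proof (cases "z \<in> std_simplex (d-2)")
    case True
    have m1: "face_map (d-1) j z \<in> std_simplex (d-1)"
      by (rule face_map_mem) (use True assms dd in auto)
    have m2: "face_map (d-1) (i-1) z \<in> std_simplex (d-1)"
      by (rule face_map_mem) (use True assms dd in auto)
    have "face (d-1) (face d \<sigma> i) j z = \<sigma> (face_map d i (face_map (d-1) j z))"
      unfolding face_def dd using True m1 by simp
    also have "\<dots> = \<sigma> (face_map d j (face_map (d-1) (i-1) z))"
      using face_map_comp[OF assms True] by simp
    also have "\<dots> = face (d-1) (face d \<sigma> j) (i-1) z"
      unfolding face_def dd using True m2 by simp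
    finally show ?thesis .
  next
    case False
    then show ?thesis unfolding face_def dd by simp
  qed
qed

lemma bdbd:
  assumes "2 \<le> d"
  shows "(\<Sum>i\<le>d. (-1)^i * bdS (d-1) (face d \<sigma> i) \<tau>) = (0::'k::comm_ring_1)"
proof -
  define G where "G = (\<lambda>(i,j). (if face (d-1) (face d \<sigma> i) j = \<tau> then 1 else 0::'k))"
  define t where "t = (\<lambda>p. (-1)^(fst p + snd p) * G p)"
  define P where "P = {..d} \<times> {..d-1}"
  define A where "A = {p\<in>P. snd p < fst p}"
  define B where "B = {p\<in>P. fst p \<le> snd p}"
  have "(\<Sum>i\<le>d. (-1)^i * bdS (d-1) (face d \<sigma> i) \<tau>) = (\<Sum>i\<le>d. \<Sum>j\<le>d-1. t (i,j))"
    unfolding bdS_def t_def G_def by (simp add: sum_distrib_left power_add mult.assoc)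
  also have "\<dots> = sum t P" unfolding P_def by (simp add: sum.cartesian_product)
  also have "\<dots> = sum t A + sum t B"
  proof -
    have "P = A \<union> B" unfolding A_def B_def by auto
    moreover have "finite A" "finite B" unfolding A_def B_def P_def by auto
    moreover have "A \<inter> B = {}" unfolding A_def B_def by auto
    ultimately show ?thesis by (simp add: sum.union_disjoint)
  qed
  finally have main: "(\<Sum>i\<le>d. (-1)^i * bdS (d-1) (face d \<sigma> i) \<tau>) = sum t A + sum t B" .
  have hA: "sum t A = sum (\<lambda>p. - t p) B"
  proof (rule sum.reindex_bij_witness[where j="\<lambda>(i,j). (j, i-1)" and i="\<lambda>(i,j). (j+1, i)"])
    fix a assume "a \<in> A" then show "(case case a of (i, j) \<Rightarrow> (j, i - 1) of (i, j) \<Rightarrow> (j + 1, i)) = a"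
      by (cases a) (auto simp: A_def)
  next
    fix a assume "a \<in> A" then show "(case a of (i, j) \<Rightarrow> (j, i - 1)) \<in> B"
      by (cases a) (auto simp: A_def B_def P_def)
  next
    fix b assume "b \<in> B" then show "(case case b of (i, j) \<Rightarrow> (j + 1, i) of (i, j) \<Rightarrow> (j, i - 1)) = b"
      by (cases b) (auto simp: B_def)
  next
    fix b assume "b \<in> B" then show "(case b of (i, j) \<Rightarrow> (j + 1, i)) \<in> A"
      using assms by (cases b) (auto simp: A_def B_def P_def)
  next
    fix a assume a: "a \<in> A"
    then obtain i j where ij: "a = (i,j)" "j < i" "i \<le> d" by (auto simp: A_def P_def)
    then obtain k where k: "i = Suc k" by (cases i) auto
    have "G (j, i-1) = G (i,j)" unfolding G_def using face_face[OF assms ij(2,3), of \<sigma>] by simp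
    show "- t (case a of (i, j) \<Rightarrow> (j, i - 1)) = t a"
    proof -
      have e: "Suc k + j = Suc (j + k)" by arith
      have "(-1::'k)^(Suc k + j) = - ((-1)^(j+k))" by (simp only: e power_Suc) simp
      then show ?thesis using ij k \<open>G (j, i-1) = G (i,j)\<close> by (simp add: t_def)
    qed
  qed
  have "sum t A + sum t B = 0" using hA by (simp add: sum_negf)
  then show ?thesis using main by simp
qed


definition cone :: "nat \<Rightarrow> ((nat\<Rightarrow>real)\<Rightarrow>real^'n) \<Rightarrow> ((nat\<Rightarrow>real)\<Rightarrow>real^'n)" where
 "cone d \<sigma> = (\<lambda>x. if x \<in> std_simplex d \<and> (\<Sum>j<d. x j) \<noteq> 0
     then (\<Sum>j<d. x j) *\<^sub>R \<sigma> (\<lambda>k. x (Suc k) / (\<Sum>j<d. x j)) else 0)"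

lemma lip_zero: "lip_simplex d \<sigma> \<Longrightarrow> x \<notin> std_simplex d \<Longrightarrow> \<sigma> x = 0"
  by (simp add: lip_simplex_def)

lemma cone_face0:
  assumes "lip_simplex (d-1) \<sigma>" "1 \<le> d"
  shows "face d (cone d \<sigma>) 0 = \<sigma>"
proof (rule ext)
  fix y
  show "face d (cone d \<sigma>) 0 y = \<sigma> y"
  proof (cases "y \<in> std_simplex (d-1)")
    case True
    have m: "face_map d 0 y \<in> std_simplex d" by (rule face_map_mem) (use assms True in auto)
    have s: "(\<Sum>j<d. face_map d 0 y j) = 1" using sum_face_map[of d 0 y] assms by simp
    have "(\<lambda>k. face_map d 0 y (Suc k) / 1) = y"
    proof
      fix k
      show "face_map d 0 y (Suc k) / 1 = y k"
        using True by (auto simp: face_map_def std_simplex_def)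
    qed
    then show ?thesis using True m s by (simp add: face_def cone_def)
  next
    case False
    then show ?thesis using lip_zero[OF assms(1) False] by (simp add: face_def)
  qed
qed

lemma cone_face1_d1: "face 1 (cone 1 \<sigma>) 1 = (\<lambda>_. 0)"
proof
  fix y
  have "face_map 1 1 y = (\<lambda>_. 0)" by (auto simp: face_map_def)
  then show "face 1 (cone 1 \<sigma>) 1 y = 0" by (simp add: face_def cone_def)
qed

lemma cone_face:
  assumes "2 \<le> d" "1 \<le> i" "i \<le> d"
  shows "face d (cone d \<sigma>) i = cone (d-1) (face (d-1) \<sigma> (i-1))"
proof (rule ext)
  fix y
  have dd: "d - 1 - 1 = d - 2" by simp
  show "face d (cone d \<sigma>) i y = cone (d-1) (face (d-1) \<sigma> (i-1)) y"
  proof (cases "y \<in> std_simplex (d-1)")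
    case False
    then show ?thesis by (simp add: face_def cone_def)
  next
    case True
    define x where "x = face_map d i y"
    define t where "t = (\<Sum>k<d-1. y k)"
    have xm: "x \<in> std_simplex d" unfolding x_def by (rule face_map_mem) (use assms True in auto)
    have xs: "(\<Sum>j<d. x j) = t" unfolding x_def t_def using sum_face_map[of d i y] assms by simp
    have L: "face d (cone d \<sigma>) i y = cone d \<sigma> x" using True by (simp add: face_def x_def)
    show ?thesis
    proof (cases "t = 0")
      case True2: True
      then show ?thesis unfolding L using xs True by (simp add: cone_def t_def)
    next
      case False
      have y0: "\<And>k. k \<ge> d-1 \<Longrightarrow> y k = 0" "\<And>k. k < d-1 \<Longrightarrow> 0 \<le> y k"
        using True by (auto simp: std_simplex_def)
      have tpos: "t > 0" using False y0(2) unfolding t_def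
        by (metis (no_types, lifting) lessThan_iff order_le_less sum_nonneg)
      obtain e where "d = Suc (Suc e)" using assms(1) by (metis add_2_eq_Suc le_Suc_ex)
      then have e: "d - 1 = Suc e" "d - 2 = e" by auto
      have shift: "t = y 0 + (\<Sum>k<d-2. y (Suc k))" unfolding t_def e sum.lessThan_Suc_shift by simp
      define z where "z = (\<lambda>k. y (Suc k) / t)"
      have zs: "(\<Sum>k<d-2. z k) = (t - y 0) / t" unfolding z_def using shift
        by (simp add: sum_divide_distrib[symmetric])
      have zm: "z \<in> std_simplex (d-2)"
      proof -
        have "(t - y 0)/t \<le> 1" using tpos y0(2)[of 0] e by (simp add: divide_le_eq_1)
        moreover have "\<forall>j\<ge>d-2. z j = 0" using y0(1) by (auto simp: z_def)
        moreover have "\<forall>j<d-2. 0 \<le> z j" using y0(2) tpos by (auto simp: z_def)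
        ultimately show ?thesis using zs by (simp add: std_simplex_def)
      qed
      have fm: "face_map (d-1) (i-1) z = (\<lambda>k. x (Suc k) / t)"
      proof
        fix m
        have one: "1 - (t - y 0) / t = y 0 / t" using tpos by (simp add: field_simps)
        show "face_map (d-1) (i-1) z m = x (Suc m) / t"
          unfolding face_map_def dd zs one x_def using y0(1) assms
          by (auto simp: z_def face_map_def)
      qed
      have R: "cone (d-1) (face (d-1) \<sigma> (i-1)) y = t *\<^sub>R \<sigma> (\<lambda>k. x (Suc k) / t)"
        using True False zm fm unfolding cone_def face_def dd t_def[symmetric] z_def[symmetric] by simp
      show ?thesis unfolding L R using xm xs False by (simp add: cone_def)
    qed
  qed
qed


lemma enorm_nonneg: "0 \<le> enorm n v" by (simp add: enorm_def sum_nonneg)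

lemma enorm_comp: "k < n \<Longrightarrow> \<bar>v k\<bar> \<le> enorm n v"
proof -
  assume k: "k < n"
  have "(v k)\<^sup>2 \<le> (\<Sum>j<n. (v j)\<^sup>2)" by (rule member_le_sum) (use k in auto)
  then have "sqrt ((v k)\<^sup>2) \<le> enorm n v" unfolding enorm_def by (rule real_sqrt_le_mono)
  then show ?thesis by simp
qed

lemma enorm_bound:
  assumes "\<And>k. k < n \<Longrightarrow> \<bar>v k\<bar> \<le> B"
  shows "enorm n v \<le> real n * B"
proof (cases "n = 0")
  case True then show ?thesis by (simp add: enorm_def)
next
  case False
  then have B: "0 \<le> B" using assms[of 0] by auto
  have "(\<Sum>j<n. (v j)\<^sup>2) \<le> (\<Sum>j<n. B\<^sup>2)"
  proof (rule sum_mono)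
    fix j assume "j \<in> {..<n}"
    then have "\<bar>v j\<bar> \<le> \<bar>B\<bar>" using assms B by auto
    then show "(v j)\<^sup>2 \<le> B\<^sup>2" by (simp add: abs_le_square_iff)
  qed
  also have "\<dots> = real n * B\<^sup>2" by simp
  also have "\<dots> \<le> (real n * B)\<^sup>2"
  proof -
    have "real n \<le> real n ^ 2" using False by (simp add: power2_eq_square)
    then show ?thesis using B by (simp add: power_mult_distrib mult_right_mono)
  qed
  finally have "enorm n v \<le> sqrt ((real n * B)\<^sup>2)" unfolding enorm_def by (rule real_sqrt_le_mono)
  then show ?thesis using B by simp
qed

lemma sum_diff_bound:
  "\<bar>(\<Sum>j<n. x j) - (\<Sum>j<n. y j)\<bar> \<le> real n * enorm n (\<lambda>j. x j - y j)"
proof -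
  have "\<bar>(\<Sum>j<n. x j) - (\<Sum>j<n. y j)\<bar> = \<bar>\<Sum>j<n. x j - y j\<bar>" by (simp add: sum_subtractf)
  also have "\<dots> \<le> (\<Sum>j<n. \<bar>x j - y j\<bar>)" by (rule sum_abs)
  also have "\<dots> \<le> (\<Sum>j<n. enorm n (\<lambda>j. x j - y j))"
    by (rule sum_mono) (use enorm_comp[of _ n "\<lambda>j. x j - y j"] in auto)
  finally show ?thesis by simp
qed


lemma comp_est:
  fixes a b u w e D :: real
  assumes "u > 0" "w > 0" "0 \<le> a" "a \<le> u" "\<bar>a - b\<bar> \<le> e" "\<bar>u - w\<bar> \<le> D"
  shows "\<bar>a/u - b/w\<bar> \<le> (e + D)/w"
proof -
  have eq: "a/u - b/w = ((a-b) + (a/u)*(w-u))/w"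
  proof -
    have "((a-b) + (a/u)*(w-u))/w = (a - b)/w + (a/u)*w/w - (a/u)*u/w"
      by (simp add: add_divide_distrib diff_divide_distrib right_diff_distrib)
    also have "\<dots> = a/u - b/w" using assms(1,2) by (simp add: diff_divide_distrib)
    finally show ?thesis by simp
  qed
  have r: "0 \<le> a/u" "a/u \<le> 1" using assms by auto
  have "\<bar>(a/u)*(w-u)\<bar> \<le> D"
  proof -
    have "\<bar>(a/u)*(w-u)\<bar> = (a/u) * \<bar>u-w\<bar>" using r by (simp only: abs_mult abs_minus_commute abs_of_nonneg)
    also have "\<dots> \<le> 1 * \<bar>u - w\<bar>" by (rule mult_right_mono) (use r in auto)
    finally show ?thesis using assms(6) by simp
  qed
  then have n: "\<bar>(a-b) + (a/u)*(w-u)\<bar> \<le> e + D" using assms(5) abs_triangle_ineq[of "a-b" "(a/u)*(w-u)"] by linarith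
  have "\<bar>a/u - b/w\<bar> = \<bar>(a-b) + (a/u)*(w-u)\<bar> / w" unfolding eq using assms(2) by simp
  also have "\<dots> \<le> (e + D)/w" by (rule divide_right_mono[OF n]) (use assms(2) in simp)
  finally show ?thesis .
qed

lemma cone_lip:
  assumes \<sigma>: "lip_simplex (d-1) \<sigma>" and d: "1 \<le> d"
  shows "lip_simplex d (cone d \<sigma>)"
proof -
  obtain L where L: "\<forall>x\<in>std_simplex (d-1). \<forall>y\<in>std_simplex (d-1). dist (\<sigma> x) (\<sigma> y) \<le> L * enorm (d-1) (\<lambda>j. x j - y j)"
    using \<sigma> by (auto simp: lip_simplex_def)
  define L' where "L' = \<bar>L\<bar>"
  have L'0: "0 \<le> L'" by (simp add: L'_def)
  have L': "dist (\<sigma> a) (\<sigma> b) \<le> L' * enorm (d-1) (\<lambda>j. a j - b j)"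
    if "a \<in> std_simplex (d-1)" "b \<in> std_simplex (d-1)" for a b
  proof -
    have "dist (\<sigma> a) (\<sigma> b) \<le> L * enorm (d-1) (\<lambda>j. a j - b j)" using L that by blast
    also have "\<dots> \<le> L' * enorm (d-1) (\<lambda>j. a j - b j)"
      by (rule mult_right_mono) (auto simp: L'_def enorm_nonneg)
    finally show ?thesis .
  qed
  define z0 where "z0 = (\<lambda>_::nat. 0::real)"
  have z0m: "z0 \<in> std_simplex (d-1)" by (simp add: std_simplex_def z0_def)
  define M where "M = norm (\<sigma> z0) + L' * real (d-1)"
  have M: "norm (\<sigma> a) \<le> M" if a: "a \<in> std_simplex (d-1)" for a
  proof -
    have ak: "\<bar>a k - z0 k\<bar> \<le> 1" if "k < d-1" for k
    proof -
      have "a k \<le> (\<Sum>j<d-1. a j)"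
        by (rule member_le_sum) (use a that in \<open>auto simp: std_simplex_def\<close>)
      then show ?thesis using a that by (auto simp: std_simplex_def z0_def)
    qed
    have "enorm (d-1) (\<lambda>j. a j - z0 j) \<le> real (d-1) * 1" by (rule enorm_bound) (use ak in auto)
    then have "dist (\<sigma> a) (\<sigma> z0) \<le> L' * real (d-1)"
      using L'[OF a z0m] L'0 by (smt (verit) mult_left_mono)
    then show ?thesis unfolding M_def using norm_triangle_ineq2[of "\<sigma> a" "\<sigma> z0"]
      by (simp add: dist_norm)
  qed
  have M0: "0 \<le> M" using M[OF z0m] norm_ge_zero[of "\<sigma> z0"] by linarith
  define s where "s = (\<lambda>x::nat\<Rightarrow>real. \<Sum>j<d. x j)"
  define p where "p = (\<lambda>(x::nat\<Rightarrow>real) k. x (Suc k) / s x)"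
  have s0: "0 \<le> s x" if "x \<in> std_simplex d" for x
    using that unfolding s_def std_simplex_def by (auto intro: sum_nonneg)
  have xle: "0 \<le> x (Suc k) \<and> x (Suc k) \<le> s x" if "x \<in> std_simplex d" for x k
  proof (cases "Suc k < d")
    case True
    have "x (Suc k) \<le> s x" unfolding s_def
      by (rule member_le_sum) (use that True in \<open>auto simp: std_simplex_def\<close>)
    then show ?thesis using that True by (auto simp: std_simplex_def)
  next
    case False then show ?thesis using that s0[OF that] by (auto simp: std_simplex_def)
  qed
  have pm: "p x \<in> std_simplex (d-1)" if x: "x \<in> std_simplex d" "s x \<noteq> 0" for x
  proof -
    have sp: "s x > 0" using s0[OF x(1)] x(2) by simp
    obtain e where e: "d = Suc e" using d by (cases d) auto
    have "s x = x 0 + (\<Sum>k<d-1. x (Suc k))" unfolding s_def e sum.lessThan_Suc_shift by simp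
    then have "(\<Sum>k<d-1. p x k) = (s x - x 0) / s x" unfolding p_def
      by (simp add: sum_divide_distrib[symmetric])
    also have "\<dots> \<le> 1" using sp x(1) d by (auto simp: std_simplex_def divide_le_eq_1)
    finally show ?thesis using x sp xle[OF x(1)] unfolding std_simplex_def p_def by auto
  qed
  have cone_eq: "cone d \<sigma> x = (if s x = 0 then 0 else s x *\<^sub>R \<sigma> (p x))" if "x \<in> std_simplex d" for x
    using that unfolding cone_def s_def p_def by auto
  define K where "K = M * real d + L' * real d * (1 + real d)"
  have K0: "0 \<le> K" unfolding K_def using M0 L'0 by simp
  have main: "dist (cone d \<sigma> x) (cone d \<sigma> y) \<le> K * enorm d (\<lambda>j. x j - y j)"
    if x: "x \<in> std_simplex d" and y: "y \<in> std_simplex d" for x y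
  proof -
    define e where "e = enorm d (\<lambda>j. x j - y j)"
    have e0: "0 \<le> e" unfolding e_def by (rule enorm_nonneg)
    have sd: "\<bar>s x - s y\<bar> \<le> real d * e" unfolding s_def e_def by (rule sum_diff_bound)
    have extra: "0 \<le> L' * real d * (1 + real d) * e" using L'0 e0 by simp
    have one_side: "norm (s b *\<^sub>R \<sigma> (p b)) \<le> K * e"
      if b: "b \<in> std_simplex d" "s b \<noteq> 0" and a0: "s a = 0" and ab: "\<bar>s a - s b\<bar> \<le> real d * e" for a b
    proof -
      have "norm (s b *\<^sub>R \<sigma> (p b)) = \<bar>s b\<bar> * norm (\<sigma> (p b))" by simp
      also have "\<dots> \<le> (real d * e) * M"
        using ab a0 M[OF pm[OF b]] by (intro mult_mono) auto
      finally show ?thesis using extra unfolding K_def by (simp add: algebra_simps)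
    qed
    show ?thesis
    proof (cases "s x = 0")
      case sx: True
      show ?thesis
      proof (cases "s y = 0")
        case True then show ?thesis using sx cone_eq[OF x] cone_eq[OF y] K0 e0 e_def by simp
      next
        case False
        have "dist (cone d \<sigma> x) (cone d \<sigma> y) = norm (s y *\<^sub>R \<sigma> (p y))"
          using sx False cone_eq[OF x] cone_eq[OF y] by simp
        also have "\<dots> \<le> K * e" by (rule one_side[OF y False sx sd])
        finally show ?thesis unfolding e_def .
      qed
    next
      case sx: False
      show ?thesis
      proof (cases "s y = 0")
        case True
        have "dist (cone d \<sigma> x) (cone d \<sigma> y) = norm (s x *\<^sub>R \<sigma> (p x))"
          using sx True cone_eq[OF x] cone_eq[OF y] by simp
        also have "\<dots> \<le> K * e" by (rule one_side[OF x sx True]) (use sd in \<open>simp add: abs_minus_commute\<close>)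
        finally show ?thesis unfolding e_def .
      next
        case sy: False
        have sxp: "s x > 0" using s0[OF x] sx by simp
        have syp: "s y > 0" using s0[OF y] sy by simp
        have comp: "\<bar>p x k - p y k\<bar> \<le> (e + real d * e) / s y" if k: "k < d - 1" for k
        proof -
          have "\<bar>x (Suc k) - y (Suc k)\<bar> \<le> e" unfolding e_def
            by (rule enorm_comp[of "Suc k" d "\<lambda>j. x j - y j", simplified]) (use k in auto)
          then show ?thesis unfolding p_def
            by (rule comp_est[OF sxp syp conjunct1[OF xle[OF x]] conjunct2[OF xle[OF x]] _ sd])
        qed
        have en: "enorm (d-1) (\<lambda>k. p x k - p y k) \<le> real (d-1) * ((e + real d * e) / s y)"
          by (rule enorm_bound) (use comp in auto)
        have "cone d \<sigma> x - cone d \<sigma> y = (s x - s y) *\<^sub>R \<sigma> (p x) + s y *\<^sub>R (\<sigma> (p x) - \<sigma> (p y))"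
          using sx sy cone_eq[OF x] cone_eq[OF y] by (simp add: algebra_simps)
        then have t1: "dist (cone d \<sigma> x) (cone d \<sigma> y) \<le> norm ((s x - s y) *\<^sub>R \<sigma> (p x)) + norm (s y *\<^sub>R (\<sigma> (p x) - \<sigma> (p y)))"
          unfolding dist_norm by (simp only: norm_triangle_ineq)
        have t2: "norm ((s x - s y) *\<^sub>R \<sigma> (p x)) \<le> (real d * e) * M"
          using sd M[OF pm[OF x sx]] by (simp add: mult_mono)
        have t3: "norm (s y *\<^sub>R (\<sigma> (p x) - \<sigma> (p y))) \<le> s y * (L' * (real (d-1) * ((e + real d * e) / s y)))"
        proof -
          have "norm (\<sigma> (p x) - \<sigma> (p y)) \<le> L' * enorm (d-1) (\<lambda>k. p x k - p y k)"
            using L'[OF pm[OF x sx] pm[OF y sy]] by (simp add: dist_norm)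
          also have "\<dots> \<le> L' * (real (d-1) * ((e + real d * e) / s y))"
            by (rule mult_left_mono[OF en L'0])
          finally have hh: "norm (\<sigma> (p x) - \<sigma> (p y)) \<le> L' * (real (d-1) * ((e + real d * e) / s y))" .
          have "norm (s y *\<^sub>R (\<sigma> (p x) - \<sigma> (p y))) = s y * norm (\<sigma> (p x) - \<sigma> (p y))"
            using syp by simp
          also have "\<dots> \<le> s y * (L' * (real (d-1) * ((e + real d * e) / s y)))"
            by (rule mult_left_mono[OF hh]) (use syp in simp)
          finally show ?thesis .
        qed
        have t4: "s y * (L' * (real (d-1) * ((e + real d * e) / s y))) = L' * real (d-1) * (1 + real d) * e"
          using syp by (simp add: field_simps)
        have t5: "L' * real (d-1) * (1 + real d) * e \<le> L' * real d * (1 + real d) * e"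
          using L'0 e0 by (intro mult_right_mono mult_left_mono) auto
        have t6: "K * e = real d * e * M + L' * real d * (1 + real d) * e"
          unfolding K_def by (simp add: algebra_simps)
        show ?thesis unfolding e_def[symmetric] using t1 t2 t3 t4 t5 t6 by linarith
      qed
    qed
  qed
  have zero: "cone d \<sigma> x = 0" if "x \<notin> std_simplex d" for x using that by (simp add: cone_def)
  show ?thesis unfolding lip_simplex_def
    by (intro conjI exI[of _ K]) (use main zero in auto)
qed


lemma bd_as_push:
  assumes "d \<noteq> 0"
  shows "bd d c = (\<lambda>\<rho>. \<Sum>x\<in>({\<sigma>. c \<sigma> \<noteq> 0} \<times> {..d}). ((-1)^(snd x) * c (fst x)) * (if face d (fst x) (snd x) = \<rho> then 1 else 0))"
  unfolding bd_def using assms by (simp add: sum.cartesian_product case_prod_beta)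

lemma bdS_cone:
  assumes "2 \<le> d" "lip_simplex (d-1) \<sigma>"
  shows "bdS d (cone d \<sigma>) \<tau> = (if \<sigma> = \<tau> then 1 else 0)
           - (\<Sum>i\<le>d-1. (-1)^i * (if cone (d-1) (face (d-1) \<sigma> i) = \<tau> then 1 else (0::'k::comm_ring_1)))"
proof -
  obtain e where e: "d = Suc e" using assms by (cases d) auto
  have f0: "face d (cone d \<sigma>) 0 = \<sigma>" by (rule cone_face0) (use assms in auto)
  have fs: "face d (cone d \<sigma>) (Suc i) = cone (d-1) (face (d-1) \<sigma> i)" if "i \<le> e" for i
    using cone_face[of d "Suc i" \<sigma>] assms that e by simp
  have "bdS d (cone d \<sigma>) \<tau> = (\<Sum>i\<le>Suc e. (-1)^i * (if face d (cone d \<sigma>) i = \<tau> then 1 else (0::'k)))"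
    unfolding bdS_def e ..
  also have "\<dots> = (if \<sigma> = \<tau> then 1 else 0) + (\<Sum>i\<le>e. (-1)^(Suc i) * (if face d (cone d \<sigma>) (Suc i) = \<tau> then 1 else (0::'k)))"
    unfolding sum.atMost_Suc_shift f0 by simp
  also have "(\<Sum>i\<le>e. (-1)^(Suc i) * (if face d (cone d \<sigma>) (Suc i) = \<tau> then 1 else (0::'k)))
      = - (\<Sum>i\<le>e. (-1)^i * (if cone (d-1) (face (d-1) \<sigma> i) = \<tau> then 1 else (0::'k)))"
    unfolding sum_negf[symmetric] by (rule sum.cong) (auto simp: fs)
  finally show ?thesis using e by simp
qed

lemma bdS_cone1:
  assumes "lip_simplex 0 \<sigma>"
  shows "bdS 1 (cone 1 \<sigma>) \<tau> = (if \<sigma> = \<tau> then 1 else 0) - (if (\<lambda>_. 0) = \<tau> then 1 else (0::'k::comm_ring_1))"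
proof -
  have f0: "face 1 (cone 1 \<sigma>) 0 = \<sigma>" by (rule cone_face0) (use assms in auto)
  show ?thesis unfolding bdS_def using f0 cone_face1_d1[of \<sigma>] by (simp add: numeral_2_eq_2)
qed


lemma sum_delta_chain:
  fixes c :: "'a \<Rightarrow> 'k::comm_ring_1"
  assumes "finite {\<sigma>. c \<sigma> \<noteq> 0}"
  shows "(\<Sum>\<sigma>\<in>{\<sigma>. c \<sigma> \<noteq> 0}. c \<sigma> * (if \<sigma> = \<tau> then 1 else 0)) = c \<tau>"
proof -
  have "(\<Sum>\<sigma>\<in>{\<sigma>. c \<sigma> \<noteq> 0}. c \<sigma> * (if \<sigma> = \<tau> then 1 else 0)) = (\<Sum>\<sigma>\<in>{\<sigma>. c \<sigma> \<noteq> 0}. if \<sigma> = \<tau> then c \<sigma> else 0)"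
    by (rule sum.cong) auto
  also have "\<dots> = c \<tau>" using assms by (simp add: sum.delta')
  finally show ?thesis .
qed

lemma bdbd_chain:
  fixes U :: "((nat \<Rightarrow> real) \<Rightarrow> real^'n) \<Rightarrow> int"
  assumes "2 \<le> d" "finite {\<sigma>. U \<sigma> \<noteq> 0}"
  shows "bd (d-1) (bd d U) \<rho> = 0"
proof -
  define S where "S = {\<sigma>. U \<sigma> \<noteq> 0} \<times> {..d}"
  have fS: "finite S" using assms by (simp add: S_def)
  have "bd (d-1) (bd d U) \<rho> = (\<Sum>x\<in>S. ((-1)^(snd x) * U (fst x)) * bdS (d-1) (face d (fst x) (snd x)) \<rho>)"
  proof -
    have bdU: "bd d U = (\<lambda>\<rho>. \<Sum>x\<in>S. ((-1)^(snd x) * U (fst x)) * (if face d (fst x) (snd x) = \<rho> then 1 else 0))"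
      using bd_as_push[of d U] assms by (simp add: S_def)
    show ?thesis unfolding bdU bd_push[OF fS] using assms by simp
  qed
  also have "\<dots> = (\<Sum>\<sigma>\<in>{\<sigma>. U \<sigma> \<noteq> 0}. U \<sigma> * (\<Sum>i\<le>d. (-1)^i * bdS (d-1) (face d \<sigma> i) \<rho>))"
    unfolding S_def by (simp add: sum.cartesian_product case_prod_beta sum_distrib_left ac_simps)
  also have "\<dots> = 0"
  proof -
    have h: "(\<Sum>i\<le>d. (-1)^i * bdS (d-1) (face d \<sigma> i) \<rho>) = (0::int)" for \<sigma>
      by (rule bdbd[OF assms(1)])
    show ?thesis unfolding h by simp
  qed
  finally show ?thesis .
qed

definition chainC :: "nat \<Rightarrow> (((nat \<Rightarrow> real) \<Rightarrow> real^'n) \<Rightarrow> int) \<Rightarrow> (((nat \<Rightarrow> real) \<Rightarrow> real^'n) \<Rightarrow> int)" where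
  "chainC d T = (\<lambda>\<rho>. \<Sum>\<sigma>\<in>{\<sigma>. T \<sigma> \<noteq> 0}. T \<sigma> * (if cone d \<sigma> = \<rho> then 1 else 0))"


lemma chainC_lchain:
  assumes "1 \<le> d" "lchain (d-1) T"
  shows "lchain d (chainC d T)"
proof -
  have fT: "finite {\<sigma>. T \<sigma> \<noteq> 0}" using assms by (simp add: lchain_def)
  have sub: "{\<rho>. chainC d T \<rho> \<noteq> 0} \<subseteq> cone d ` {\<sigma>. T \<sigma> \<noteq> 0}"
    unfolding chainC_def by (rule push_supp[OF fT])
  have "lip_simplex d \<rho>" if r: "chainC d T \<rho> \<noteq> 0" for \<rho>
  proof -
    obtain \<sigma> where "T \<sigma> \<noteq> 0" "\<rho> = cone d \<sigma>" using sub r by blast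
    then show ?thesis using cone_lip[of d \<sigma>] assms by (auto simp: lchain_def)
  qed
  then show ?thesis unfolding lchain_def using finite_subset[OF sub] fT by blast
qed

lemma bd_chainC:
  assumes "1 \<le> d" "finite {\<sigma>. T \<sigma> \<noteq> 0}"
  shows "bd d (chainC d T) \<tau> = (\<Sum>\<sigma>\<in>{\<sigma>. T \<sigma> \<noteq> 0}. T \<sigma> * bdS d (cone d \<sigma>) \<tau>)"
  unfolding chainC_def bd_push[OF assms(2)] using assms by simp

lemma bd_scale2:
  fixes T :: "((nat \<Rightarrow> real) \<Rightarrow> real^'n) \<Rightarrow> int"
  assumes "finite {\<sigma>. T \<sigma> \<noteq> 0}"
  shows "bd d (\<lambda>\<tau>. 2 * T \<tau>) \<rho> = 2 * bd d T \<rho>"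
proof -
  have "bd d (\<lambda>\<tau>. 2 * T \<tau>) \<rho> = (if d = 0 then 0 else \<Sum>\<sigma>\<in>{\<sigma>. T \<sigma> \<noteq> 0}. 2 * T \<sigma> * bdS d \<sigma> \<rho>)"
    by (rule bd_expand) (use assms in auto)
  moreover have "bd d T \<rho> = (if d = 0 then 0 else \<Sum>\<sigma>\<in>{\<sigma>. T \<sigma> \<noteq> 0}. T \<sigma> * bdS d \<sigma> \<rho>)"
    by (rule bd_expand) (use assms in auto)
  ultimately show ?thesis by (simp add: sum_distrib_left mult.assoc)
qed

lemma filling:
  fixes T U :: "((nat \<Rightarrow> real) \<Rightarrow> real^'n) \<Rightarrow> int"
  assumes d: "1 \<le> d" and T: "lchain (d-1) T" and U: "lchain d U" and bdU: "bd d U = (\<lambda>\<tau>. 2 * T \<tau>)"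
  shows "bd d (chainC d T) = T"
proof
  fix \<tau>
  have fT: "finite {\<sigma>. T \<sigma> \<noteq> 0}" using T by (simp add: lchain_def)
  have fU: "finite {\<sigma>. U \<sigma> \<noteq> 0}" using U by (simp add: lchain_def)
  have lipT: "lip_simplex (d-1) \<sigma>" if "T \<sigma> \<noteq> 0" for \<sigma> using T that by (simp add: lchain_def)
  show "bd d (chainC d T) \<tau> = T \<tau>"
  proof (cases "d = 1")
    case True
    define S where "S = {\<sigma>. U \<sigma> \<noteq> 0} \<times> {..1::nat}"
    define f where "f = (\<lambda>x::((nat \<Rightarrow> real) \<Rightarrow> real^'n) \<times> nat. face 1 (fst x) (snd x))"
    define a where "a = (\<lambda>x::((nat \<Rightarrow> real) \<Rightarrow> real^'n) \<times> nat. ((-1)^(snd x) * U (fst x)::int))"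
    have fS: "finite S" using fU by (simp add: S_def)
    have bdU1: "bd 1 U = (\<lambda>\<rho>. \<Sum>x\<in>S. a x * (if f x = \<rho> then 1 else 0))"
      using bd_as_push[of 1 U] by (simp add: S_def a_def f_def)
    have sumT: "(\<Sum>\<sigma>\<in>{\<sigma>. T \<sigma> \<noteq> 0}. T \<sigma>) = 0"
    proof -
      have subT: "{\<sigma>. T \<sigma> \<noteq> 0} \<subseteq> f ` S"
      proof
        fix \<rho> assume "\<rho> \<in> {\<sigma>. T \<sigma> \<noteq> 0}"
        then have "bd 1 U \<rho> \<noteq> 0" using bdU True by simp
        then show "\<rho> \<in> f ` S" using push_supp[OF fS, of a f] unfolding bdU1 by blast
      qed
      have "(\<Sum>\<rho>\<in>f ` S. bd 1 U \<rho>) = (\<Sum>\<rho>\<in>f ` S. (\<Sum>x\<in>S. a x * (if f x = \<rho> then 1 else 0)) * 1)"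
        unfolding bdU1 by simp
      also have "\<dots> = (\<Sum>x\<in>S. a x * 1)" by (rule push_collapse[OF fS]) (use fS in auto)
      also have "\<dots> = (\<Sum>\<sigma>\<in>{\<sigma>. U \<sigma> \<noteq> 0}. \<Sum>i\<le>1::nat. (-1)^i * U \<sigma>)"
        unfolding S_def a_def sum.cartesian_product' by simp
      also have "\<dots> = 0" by simp
      finally have "(\<Sum>\<rho>\<in>f ` S. 2 * T \<rho>) = 0" using bdU True by simp
      moreover have "(\<Sum>\<rho>\<in>f ` S. T \<rho>) = (\<Sum>\<sigma>\<in>{\<sigma>. T \<sigma> \<noteq> 0}. T \<sigma>)"
        by (rule sum.mono_neutral_right) (use fS subT in auto)
      ultimately show ?thesis by (simp add: sum_distrib_left[symmetric])
    qed
    have "bd d (chainC d T) \<tau> = (\<Sum>\<sigma>\<in>{\<sigma>. T \<sigma> \<noteq> 0}. T \<sigma> * bdS d (cone d \<sigma>) \<tau>)"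
      by (rule bd_chainC[OF d fT])
    also have "\<dots> = (\<Sum>\<sigma>\<in>{\<sigma>. T \<sigma> \<noteq> 0}. T \<sigma> * ((if \<sigma> = \<tau> then 1 else 0) - (if (\<lambda>_. 0) = \<tau> then 1 else 0)))"
    proof (rule sum.cong[OF refl])
      fix \<sigma> assume "\<sigma> \<in> {\<sigma>. T \<sigma> \<noteq> 0}"
      then have l: "lip_simplex 0 \<sigma>" using lipT True by auto
      have "bdS d (cone d \<sigma>) \<tau> = (if \<sigma> = \<tau> then 1 else 0) - (if (\<lambda>_. 0) = \<tau> then 1 else (0::int))"
        unfolding True by (rule bdS_cone1[OF l])
      then show "T \<sigma> * bdS d (cone d \<sigma>) \<tau> = T \<sigma> * ((if \<sigma> = \<tau> then 1 else 0) - (if (\<lambda>_. 0) = \<tau> then 1 else 0))"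
        by simp
    qed
    also have "\<dots> = (\<Sum>\<sigma>\<in>{\<sigma>. T \<sigma> \<noteq> 0}. T \<sigma> * (if \<sigma> = \<tau> then 1 else 0)) - (\<Sum>\<sigma>\<in>{\<sigma>. T \<sigma> \<noteq> 0}. T \<sigma>) * (if (\<lambda>_. 0) = \<tau> then 1 else 0)"
      by (simp add: right_diff_distrib sum_subtractf sum_distrib_right)
    also have "\<dots> = T \<tau>" using sumT sum_delta_chain[OF fT] by simp
    finally show ?thesis .
  next
    case False
    then have d2: "2 \<le> d" using d by simp
    have bdT: "bd (d-1) T \<rho> = 0" for \<rho>
    proof -
      have "2 * bd (d-1) T \<rho> = bd (d-1) (\<lambda>\<tau>. 2 * T \<tau>) \<rho>" using bd_scale2[OF fT] by simp
      also have "\<dots> = bd (d-1) (bd d U) \<rho>" using bdU by simp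
      also have "\<dots> = 0" by (rule bdbd_chain[OF d2 fU])
      finally show ?thesis by simp
    qed
    define S where "S = {\<sigma>. T \<sigma> \<noteq> 0} \<times> {..d-1}"
    define f where "f = (\<lambda>x::((nat \<Rightarrow> real) \<Rightarrow> real^'n) \<times> nat. face (d-1) (fst x) (snd x))"
    define a where "a = (\<lambda>x::((nat \<Rightarrow> real) \<Rightarrow> real^'n) \<times> nat. ((-1)^(snd x) * T (fst x)::int))"
    define h where "h = (\<lambda>\<rho>. if cone (d-1) \<rho> = \<tau> then 1 else (0::int))"
    have fS: "finite S" using fT by (simp add: S_def)
    have bdT1: "bd (d-1) T = (\<lambda>\<rho>. \<Sum>x\<in>S. a x * (if f x = \<rho> then 1 else 0))"
      using bd_as_push[of "d-1" T] d2 by (simp add: S_def a_def f_def)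
    have Z: "(\<Sum>\<sigma>\<in>{\<sigma>. T \<sigma> \<noteq> 0}. T \<sigma> * (\<Sum>i\<le>d-1. (-1)^i * h (face (d-1) \<sigma> i))) = 0"
    proof -
      have "(\<Sum>\<sigma>\<in>{\<sigma>. T \<sigma> \<noteq> 0}. T \<sigma> * (\<Sum>i\<le>d-1. (-1)^i * h (face (d-1) \<sigma> i))) = (\<Sum>x\<in>S. a x * h (f x))"
        unfolding S_def a_def f_def by (simp add: sum.cartesian_product case_prod_beta sum_distrib_left ac_simps)
      also have "\<dots> = (\<Sum>\<rho>\<in>f ` S. (\<Sum>x\<in>S. a x * (if f x = \<rho> then 1 else 0)) * h \<rho>)"
        by (rule push_collapse[OF fS, symmetric]) (use fS in auto)
      also have "\<dots> = (\<Sum>\<rho>\<in>f ` S. bd (d-1) T \<rho> * h \<rho>)" unfolding bdT1 ..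
      also have "\<dots> = 0" using bdT by simp
      finally show ?thesis .
    qed
    have "bd d (chainC d T) \<tau> = (\<Sum>\<sigma>\<in>{\<sigma>. T \<sigma> \<noteq> 0}. T \<sigma> * bdS d (cone d \<sigma>) \<tau>)"
      by (rule bd_chainC[OF d fT])
    also have "\<dots> = (\<Sum>\<sigma>\<in>{\<sigma>. T \<sigma> \<noteq> 0}. T \<sigma> * ((if \<sigma> = \<tau> then 1 else 0) - (\<Sum>i\<le>d-1. (-1)^i * h (face (d-1) \<sigma> i))))"
    proof (rule sum.cong[OF refl])
      fix \<sigma> assume "\<sigma> \<in> {\<sigma>. T \<sigma> \<noteq> 0}"
      then have "bdS d (cone d \<sigma>) \<tau> = (if \<sigma> = \<tau> then 1 else 0) - (\<Sum>i\<le>d-1. (-1)^i * h (face (d-1) \<sigma> i))"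
        unfolding h_def by (intro bdS_cone[OF d2 lipT]) simp
      then show "T \<sigma> * bdS d (cone d \<sigma>) \<tau> = T \<sigma> * ((if \<sigma> = \<tau> then 1 else 0) - (\<Sum>i\<le>d-1. (-1)^i * h (face (d-1) \<sigma> i)))"
        by simp
    qed
    also have "\<dots> = (\<Sum>\<sigma>\<in>{\<sigma>. T \<sigma> \<noteq> 0}. T \<sigma> * (if \<sigma> = \<tau> then 1 else 0)) - (\<Sum>\<sigma>\<in>{\<sigma>. T \<sigma> \<noteq> 0}. T \<sigma> * (\<Sum>i\<le>d-1. (-1)^i * h (face (d-1) \<sigma> i)))"
      by (simp add: right_diff_distrib sum_subtractf)
    also have "\<dots> = T \<tau>" unfolding Z using sum_delta_chain[OF fT] by simp
    finally show ?thesis .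
  qed
qed


lemma prod_list_real_nonneg:
  assumes "\<forall>a\<in>set as. Im a = 0 \<and> 0 \<le> Re a"
  shows "Im (prod_list as) = 0 \<and> 0 \<le> Re (prod_list as)"
  using assms by (induction as) auto

lemma gram_det_nonneg:
  fixes f :: "nat \<Rightarrow> 'k \<Rightarrow> real"
  assumes K: "finite K"
  shows "0 \<le> det_nat d (\<lambda>i j. \<Sum>k\<in>K. f i k * f j k)"
proof -
  define G where "G = (\<lambda>i j. \<Sum>k\<in>K. f i k * f j k)"
  define F where "F = (\<lambda>i k. complex_of_real (f i k))"
  define A where "A = Matrix.mat d d (\<lambda>(i,j). complex_of_real (G i j))"
  have A: "A \<in> carrier_mat d d" by (simp add: A_def)
  obtain as where cp: "char_poly A = (\<Prod>a\<leftarrow>as. [:- a, 1:])"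
    using char_poly_factorized[OF A] by blast
  obtain B P Q where sd: "schur_decomposition A as = (B, P, Q)" by (cases "schur_decomposition A as") auto
  from schur_decomposition[OF A cp sd]
  have sw: "similar_mat_wit A B P Q" and ut: "upper_triangular B" and dg: "diag_mat B = as" by auto
  have Bc: "B \<in> carrier_mat d d" using similar_mat_witD2(5)[OF A sw] .
  have "Determinant.det A = Determinant.det B"
    by (rule det_similar) (use sw in \<open>auto simp: similar_mat_def\<close>)
  also have "\<dots> = prod_list as" using det_upper_triangular[OF ut Bc] dg by simp
  finally have detA: "Determinant.det A = prod_list as" .
  have ev: "Im a = 0 \<and> 0 \<le> Re a" if a: "a \<in> set as" for a
  proof -
    have "poly (char_poly A) a = 0" unfolding cp using a by (simp add: poly_prod_list prod_list_zero_iff)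
    then have "eigenvalue A a" using eigenvalue_root_char_poly[OF A] by simp
    then obtain v where v: "v \<in> carrier_vec d" "v \<noteq> 0\<^sub>v d" "A *\<^sub>v v = a \<cdot>\<^sub>v v"
      unfolding eigenvalue_def eigenvector_def using A by auto
    have row: "(\<Sum>j<d. complex_of_real (G i j) * v $ j) = a * v $ i" if "i < d" for i
    proof -
      have "(A *\<^sub>v v) $ i = a * v $ i" using v(3) that v(1) by simp
      moreover have "(A *\<^sub>v v) $ i = (\<Sum>j<d. complex_of_real (G i j) * v $ j)"
        using that v(1) unfolding A_def by (simp add: scalar_prod_def atLeast0LessThan)
      ultimately show ?thesis by simp
    qed
    define S where "S = (\<Sum>i<d. (\<Sum>j<d. complex_of_real (G i j) * v $ j) * cnj (v $ i))"
    define w where "w = (\<lambda>k. \<Sum>j<d. F j k * v $ j)"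
    have S1: "S = a * (\<Sum>i<d. v $ i * cnj (v $ i))"
      unfolding S_def by (simp add: row sum_distrib_left mult.assoc)
    have cw: "cnj (w k) = (\<Sum>i<d. F i k * cnj (v $ i))" for k
      unfolding w_def F_def by (simp add: cnj_sum)
    have S2: "S = (\<Sum>k\<in>K. w k * cnj (w k))"
    proof -
      have "S = (\<Sum>i<d. \<Sum>j<d. \<Sum>k\<in>K. F i k * F j k * v $ j * cnj (v $ i))"
        unfolding S_def G_def F_def by (simp add: sum_distrib_right)
      also have "\<dots> = (\<Sum>k\<in>K. \<Sum>i<d. \<Sum>j<d. F i k * F j k * v $ j * cnj (v $ i))"
        by (simp add: sum.swap[of _ K])
      also have "\<dots> = (\<Sum>k\<in>K. w k * cnj (w k))"
        unfolding cw unfolding w_def by (simp add: sum_distrib_left sum_distrib_right ac_simps)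
      finally show ?thesis .
    qed
    define X where "X = (\<Sum>k\<in>K. (Re (w k))\<^sup>2 + (Im (w k))\<^sup>2)"
    define Y where "Y = (\<Sum>i<d. (Re (v $ i))\<^sup>2 + (Im (v $ i))\<^sup>2)"
    have X0: "0 \<le> X" unfolding X_def by (intro sum_nonneg) auto
    have SX: "S = complex_of_real X" unfolding S2 X_def by (simp add: complex_mult_cnj)
    have SY: "S = a * complex_of_real Y" unfolding S1 Y_def by (simp add: complex_mult_cnj)
    have Y0: "0 < Y"
    proof -
      obtain i where i: "i < d" "v $ i \<noteq> 0"
        using v(1,2) by (metis carrier_vecD eq_vecI index_zero_vec(1,2))
      have "0 < (Re (v $ i))\<^sup>2 + (Im (v $ i))\<^sup>2" using i(2)
        by (metis complex_eq_iff sum_power2_gt_zero_iff zero_complex.sel(1,2))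
      also have "\<dots> \<le> Y" unfolding Y_def
        by (rule member_le_sum) (use i in auto)
      finally show ?thesis .
    qed
    have "a = complex_of_real (X / Y)" using SX SY Y0
      by (metis divide_complex_def mult.commute nonzero_divide_eq_eq of_real_divide of_real_eq_0_iff order_less_irrefl)
    then show ?thesis using X0 Y0 by simp
  qed
  have "Im (Determinant.det A) = 0 \<and> 0 \<le> Re (Determinant.det A)"
    unfolding detA by (rule prod_list_real_nonneg) (use ev in auto)
  moreover have "Determinant.det A = complex_of_real (det_nat d G)"
  proof -
    have "Determinant.det A = (\<Sum>p\<in>{p. p permutes {0..<d}}. signof p * (\<Prod>i = 0..<d. A $$ (i, p i)))"
      using det_def'[OF A] .
    also have "\<dots> = (\<Sum>p\<in>{p. p permutes {..<d}}. complex_of_real (of_int (sign p) * (\<Prod>i<d. G i (p i))))"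
    proof (rule sum.cong)
      show "{p. p permutes {0..<d}} = {p. p permutes {..<d}}" by (simp add: atLeast0LessThan)
    next
      fix p assume "p \<in> {p. p permutes {..<d}}"
      then have pd: "\<And>i. i < d \<Longrightarrow> p i < d" using permutes_in_image by fastforce
      have "(\<Prod>i = 0..<d. A $$ (i, p i)) = (\<Prod>i<d. complex_of_real (G i (p i)))"
        unfolding atLeast0LessThan by (rule prod.cong) (auto simp: A_def pd)
      then show "signof p * (\<Prod>i = 0..<d. A $$ (i, p i)) = complex_of_real (of_int (sign p) * (\<Prod>i<d. G i (p i)))"
        by simp
    qed
    also have "\<dots> = complex_of_real (det_nat d G)" unfolding det_nat_def by simp
    finally show ?thesis .
  qed
  ultimately show ?thesis unfolding G_def by simp
qed


lemma of_int_bit: "(of_int k :: bit) = (if even k then 0 else 1)"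
proof (cases "even k")
  case True then obtain m where "k = 2*m" by blast
  then show ?thesis using True by simp
next
  case False then obtain m where "k = 2*m+1" using oddE by blast
  then show ?thesis using False by simp
qed

lemma of_int_bit_eq: "((of_int a :: bit) = of_int b) \<longleftrightarrow> even (a - b)"
  unfolding of_int_bit by auto

lemma jac_nonneg: "0 \<le> jac d \<sigma> x"
proof -
  have "0 \<le> det_nat d (\<lambda>i j. D i \<bullet> D j)" for D :: "nat \<Rightarrow> real^'n"
  proof -
    have "(\<lambda>i j. D i \<bullet> D j) = (\<lambda>i j. \<Sum>k\<in>UNIV. D i $ k * D j $ k)" by (simp add: inner_vec_def)
    then show ?thesis using gram_det_nonneg[where K="UNIV :: 'n set" and f="\<lambda>i k. D i $ k" and d=d] by simp
  qed
  then show ?thesis unfolding jac_def Let_def by auto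
qed

lemma vol_nonneg: "0 \<le> simplex_vol d \<sigma>"
  unfolding simplex_vol_def
  by (rule Bochner_Integration.integral_nonneg) (auto simp: jac_nonneg indicator_def)

lemma mass_expand:
  assumes "finite S" "{\<sigma>. c \<sigma> \<noteq> 0} \<subseteq> S"
  shows "mass d c = (\<Sum>\<sigma>\<in>S. \<bar>real_of_int (c \<sigma>)\<bar> * simplex_vol d \<sigma>)"
  unfolding mass_def by (rule sum.mono_neutral_left) (use assms in auto)

lemma mass_nonneg: "0 \<le> mass d c"
  unfolding mass_def by (rule sum_nonneg) (simp add: vol_nonneg)

lemma bd_comb:
  fixes A B :: "((nat \<Rightarrow> real) \<Rightarrow> real^'n) \<Rightarrow> int"
  assumes "finite {\<sigma>. A \<sigma> \<noteq> 0}" "finite {\<sigma>. B \<sigma> \<noteq> 0}"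
  shows "bd d (\<lambda>\<sigma>. p * A \<sigma> + q * B \<sigma>) \<tau> = p * bd d A \<tau> + q * bd d B \<tau>"
proof -
  define S where "S = {\<sigma>. A \<sigma> \<noteq> 0} \<union> {\<sigma>. B \<sigma> \<noteq> 0}"
  have fS: "finite S" using assms by (simp add: S_def)
  have 1: "bd d (\<lambda>\<sigma>. p * A \<sigma> + q * B \<sigma>) \<tau> = (if d = 0 then 0 else \<Sum>\<sigma>\<in>S. (p * A \<sigma> + q * B \<sigma>) * bdS d \<sigma> \<tau>)"
    by (rule bd_expand[OF fS]) (auto simp: S_def)
  have 2: "bd d A \<tau> = (if d = 0 then 0 else \<Sum>\<sigma>\<in>S. A \<sigma> * bdS d \<sigma> \<tau>)"
    by (rule bd_expand[OF fS]) (auto simp: S_def)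
  have 3: "bd d B \<tau> = (if d = 0 then 0 else \<Sum>\<sigma>\<in>S. B \<sigma> * bdS d \<sigma> \<tau>)"
    by (rule bd_expand[OF fS]) (auto simp: S_def)
  show ?thesis unfolding 1 2 3
    by (simp add: distrib_right sum.distrib sum_distrib_left mult.assoc)
qed

lemma bdS_bit: "(bdS d \<sigma> \<tau> :: bit) = of_int (bdS d \<sigma> \<tau> :: int)"
  unfolding bdS_def by (simp add: of_int_sum)

theorem lemma1p2:
  fixes T U :: "((nat \<Rightarrow> real) \<Rightarrow> real^'n) \<Rightarrow> int" and d :: nat
  assumes "1 \<le> d"
    and "lchain (d - 1) T"
    and "lchain d U"
    and "bd d U = (\<lambda>\<tau>. 2 * T \<tau>)"
  shows "lchain d (mod2 U) \<and> bd d (mod2 U) = (\<lambda>_. 0)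
         \<and> FV d T \<le> (mass d U + NOA d (mod2 U)) / 2"
proof -
  note d = assms(1) and T = assms(2) and U = assms(3) and bdU = assms(4)
  have fT: "finite {\<sigma>. T \<sigma> \<noteq> 0}" using T by (simp add: lchain_def)
  have fU: "finite {\<sigma>. U \<sigma> \<noteq> 0}" using U by (simp add: lchain_def)
  have suppM: "{\<sigma>. mod2 U \<sigma> \<noteq> 0} \<subseteq> {\<sigma>. U \<sigma> \<noteq> 0}" by (auto simp: mod2_def)
  have P1: "lchain d (mod2 U)"
    using U suppM finite_subset[OF suppM fU] unfolding lchain_def by blast
  have P2: "bd d (mod2 U) = (\<lambda>_. 0)"
  proof
    fix \<tau>
    have "bd d (mod2 U) \<tau> = (\<Sum>\<sigma>\<in>{\<sigma>. U \<sigma> \<noteq> 0}. mod2 U \<sigma> * bdS d \<sigma> \<tau>)"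
      using bd_expand[OF fU suppM, of d \<tau>] d by simp
    also have "\<dots> = of_int (\<Sum>\<sigma>\<in>{\<sigma>. U \<sigma> \<noteq> 0}. U \<sigma> * bdS d \<sigma> \<tau>)"
      by (simp add: of_int_sum mod2_def bdS_bit)
    also have "(\<Sum>\<sigma>\<in>{\<sigma>. U \<sigma> \<noteq> 0}. U \<sigma> * bdS d \<sigma> \<tau>) = bd d U \<tau>"
      using bd_expand[OF fU order_refl, of d \<tau>] d by simp
    also have "\<dots> = 2 * T \<tau>" using bdU by simp
    finally show "bd d (mod2 U) \<tau> = 0" by simp
  qed
  define V where "V = chainC d T"
  have lV: "lchain d V" unfolding V_def by (rule chainC_lchain[OF d T])
  have bdV: "bd d V = T" unfolding V_def by (rule filling[OF d T U bdU])
  have fV: "finite {\<sigma>. V \<sigma> \<noteq> 0}" using lV by (simp add: lchain_def)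
  define R0 where "R0 = (\<lambda>\<sigma>. 1 * U \<sigma> + (-2) * V \<sigma>)"
  have R0in: "lchain d R0 \<and> bd d R0 = (\<lambda>_. 0) \<and> mod2 R0 = mod2 U"
  proof (intro conjI)
    have sub: "{\<sigma>. R0 \<sigma> \<noteq> 0} \<subseteq> {\<sigma>. U \<sigma> \<noteq> 0} \<union> {\<sigma>. V \<sigma> \<noteq> 0}" by (auto simp: R0_def)
    show "lchain d R0" unfolding lchain_def
      using finite_subset[OF sub] fU fV sub U lV by (auto simp: lchain_def)
    show "bd d R0 = (\<lambda>_. 0)"
    proof
      fix \<tau>
      have "bd d R0 \<tau> = 1 * bd d U \<tau> + (-2) * bd d V \<tau>" unfolding R0_def by (rule bd_comb[OF fU fV])
      then show "bd d R0 \<tau> = 0" using bdU bdV by simp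
    qed
    show "mod2 R0 = mod2 U"
      unfolding mod2_def R0_def by (auto simp: of_int_bit_eq)
  qed
  define X where "X = {mass d R | R. lchain d R \<and> bd d R = (\<lambda>_. 0) \<and> mod2 R = mod2 U}"
  define Y where "Y = {mass d V | V. lchain d V \<and> bd d V = T}"
  have Xne: "X \<noteq> {}" using R0in unfolding X_def by blast
  have Ybdd: "bdd_below Y" unfolding Y_def bdd_below_def using mass_nonneg by blast
  have key: "2 * FV d T - mass d U \<le> x" if "x \<in> X" for x
  proof -
    obtain R where R: "x = mass d R" "lchain d R" "bd d R = (\<lambda>_. 0)" "mod2 R = mod2 U"
      using \<open>x \<in> X\<close> unfolding X_def by blast
    have fR: "finite {\<sigma>. R \<sigma> \<noteq> 0}" using R by (simp add: lchain_def)
    have ev: "even (U \<sigma> - R \<sigma>)" for \<sigma>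
      using fun_cong[OF R(4), of \<sigma>] unfolding mod2_def of_int_bit_eq by (simp add: dvd_diff_commute)
    define W where "W = (\<lambda>\<sigma>. (U \<sigma> - R \<sigma>) div 2)"
    have W2: "U \<sigma> - R \<sigma> = 2 * W \<sigma>" for \<sigma> using ev[of \<sigma>] unfolding W_def by simp
    have subW: "{\<sigma>. W \<sigma> \<noteq> 0} \<subseteq> {\<sigma>. U \<sigma> \<noteq> 0} \<union> {\<sigma>. R \<sigma> \<noteq> 0}"
    proof
      fix \<sigma> assume "\<sigma> \<in> {\<sigma>. W \<sigma> \<noteq> 0}"
      then show "\<sigma> \<in> {\<sigma>. U \<sigma> \<noteq> 0} \<union> {\<sigma>. R \<sigma> \<noteq> 0}" using W2[of \<sigma>] by auto
    qed
    have fW: "finite {\<sigma>. W \<sigma> \<noteq> 0}" using finite_subset[OF subW] fU fR by simp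
    have lW: "lchain d W" unfolding lchain_def using fW subW U R(2) by (auto simp: lchain_def)
    have bdW: "bd d W = T"
    proof
      fix \<tau>
      have "U = (\<lambda>\<sigma>. 1 * R \<sigma> + 2 * W \<sigma>)" using W2 by (auto simp: algebra_simps fun_eq_iff)
      then have "bd d U \<tau> = 1 * bd d R \<tau> + 2 * bd d W \<tau>" using bd_comb[OF fR fW] by metis
      then show "bd d W \<tau> = T \<tau>" using bdU R(3) by simp
    qed
    have "FV d T \<le> mass d W" unfolding FV_def
      by (rule cInf_lower) (use lW bdW Ybdd in \<open>auto simp: Y_def\<close>)
    also have "mass d W \<le> (mass d U + mass d R) / 2"
    proof -
      define S where "S = {\<sigma>. U \<sigma> \<noteq> 0} \<union> {\<sigma>. R \<sigma> \<noteq> 0}"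
      have fS: "finite S" using fU fR by (simp add: S_def)
      have "mass d W = (\<Sum>\<sigma>\<in>S. \<bar>real_of_int (W \<sigma>)\<bar> * simplex_vol d \<sigma>)"
        by (rule mass_expand[OF fS]) (use subW in \<open>auto simp: S_def\<close>)
      also have "\<dots> \<le> (\<Sum>\<sigma>\<in>S. ((\<bar>real_of_int (U \<sigma>)\<bar> + \<bar>real_of_int (R \<sigma>)\<bar>) / 2) * simplex_vol d \<sigma>)"
      proof (rule sum_mono)
        fix \<sigma>
        have "2 * \<bar>real_of_int (W \<sigma>)\<bar> = \<bar>real_of_int (U \<sigma>) - real_of_int (R \<sigma>)\<bar>"
          using W2[of \<sigma>] by (metis abs_mult_pos of_int_diff of_int_mult of_int_numeral zero_le_numeral abs_mult abs_numeral)
        then have h2: "2 * \<bar>real_of_int (W \<sigma>)\<bar> \<le> \<bar>real_of_int (U \<sigma>)\<bar> + \<bar>real_of_int (R \<sigma>)\<bar>"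
          using abs_triangle_ineq4[of "real_of_int (U \<sigma>)" "real_of_int (R \<sigma>)"] by linarith
        have "(2 * \<bar>real_of_int (W \<sigma>)\<bar>) / 2 \<le> (\<bar>real_of_int (U \<sigma>)\<bar> + \<bar>real_of_int (R \<sigma>)\<bar>) / 2"
          by (rule divide_right_mono[OF h2]) simp
        then have "\<bar>real_of_int (W \<sigma>)\<bar> \<le> (\<bar>real_of_int (U \<sigma>)\<bar> + \<bar>real_of_int (R \<sigma>)\<bar>) / 2"
          by simp
        then show "\<bar>real_of_int (W \<sigma>)\<bar> * simplex_vol d \<sigma> \<le> ((\<bar>real_of_int (U \<sigma>)\<bar> + \<bar>real_of_int (R \<sigma>)\<bar>) / 2) * simplex_vol d \<sigma>"
          by (rule mult_right_mono) (rule vol_nonneg)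
      qed
      also have "\<dots> = ((\<Sum>\<sigma>\<in>S. \<bar>real_of_int (U \<sigma>)\<bar> * simplex_vol d \<sigma>) + (\<Sum>\<sigma>\<in>S. \<bar>real_of_int (R \<sigma>)\<bar> * simplex_vol d \<sigma>)) / 2"
      proof -
        have "(\<Sum>\<sigma>\<in>S. ((\<bar>real_of_int (U \<sigma>)\<bar> + \<bar>real_of_int (R \<sigma>)\<bar>) / 2) * simplex_vol d \<sigma>)
            = (\<Sum>\<sigma>\<in>S. (\<bar>real_of_int (U \<sigma>)\<bar> * simplex_vol d \<sigma> + \<bar>real_of_int (R \<sigma>)\<bar> * simplex_vol d \<sigma>) / 2)"
          by (rule sum.cong) (simp_all add: distrib_right)
        also have "\<dots> = ((\<Sum>\<sigma>\<in>S. \<bar>real_of_int (U \<sigma>)\<bar> * simplex_vol d \<sigma>) + (\<Sum>\<sigma>\<in>S. \<bar>real_of_int (R \<sigma>)\<bar> * simplex_vol d \<sigma>)) / 2"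
          by (simp only: sum_divide_distrib[symmetric] sum.distrib)
        finally show ?thesis .
      qed
      also have "\<dots> = (mass d U + mass d R) / 2"
        using mass_expand[OF fS, of U d] mass_expand[OF fS, of R d] by (simp add: S_def)
      finally show ?thesis .
    qed
    finally show ?thesis using R(1) by simp
  qed
  have "2 * FV d T - mass d U \<le> NOA d (mod2 U)"
    unfolding NOA_def by (rule cInf_greatest) (use Xne key in \<open>auto simp: X_def\<close>)
  then have P3: "FV d T \<le> (mass d U + NOA d (mod2 U)) / 2" by simp
  show ?thesis using P1 P2 P3 by blast
qed


end
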